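(* Let $G$ be an abelian group and let $H$ be a uniformly fully inert subgroup of $G$. Then $H$ is commensurable with some fully invariant subgroup of $G$.
   Context: All groups are additively written abelian groups. A subgroup $F$ of $G$ is fully invariant if $\phi(F)\subseteq F$ for every endomorphism $\phi$ of $G$. A subgroup $S$ of $G$ is uniformly fully inert if there is a fixed positive integer $m$ such that the quotient $(\phi(S)+S)/S$ has at most $m$ elements for every endomorphism $\phi$ of $G$. Two subgroups $B,C$ of $G$ are commensurable if both $(B+C)/B$ and $(B+C)/C$ are finite. *)

theory Defs
  imports Main
begin

definition subgrp :: "'a::ab_group_add set \<Rightarrow> bool" where
  "subgrp H \<longleftrightarrow> 0 \<in> H \<and> (\<forall>x\<in>H. \<forall>y\<in>H. x + y \<in> H) \<and> (\<forall>x\<in>H. - x \<in> H)"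

definition endo :: "('a::ab_group_add \<Rightarrow> 'a) \<Rightarrow> bool" where
  "endo \<phi> \<longleftrightarrow> (\<forall>x y. \<phi> (x + y) = \<phi> x + \<phi> y)"

definition sumset :: "'a::ab_group_add set \<Rightarrow> 'a set \<Rightarrow> 'a set" where
  "sumset A B = {a + b | a b. a \<in> A \<and> b \<in> B}"

definition quotient_set :: "'a::ab_group_add set \<Rightarrow> 'a set \<Rightarrow> 'a set set" where
  "quotient_set A B = (\<lambda>x. {x + b | b. b \<in> B}) ` A"

definition fully_invariant :: "'a::ab_group_add set \<Rightarrow> bool" where
  "fully_invariant F \<longleftrightarrow> subgrp F \<and> (\<forall>\<phi>. endo \<phi> \<longrightarrow> \<phi> ` F \<subseteq> F)"

definition uniformly_fully_inert :: "'a::ab_group_add set \<Rightarrow> bool" where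
  "uniformly_fully_inert S \<longleftrightarrow> subgrp S \<and>
     (\<exists>m::nat. m > 0 \<and> (\<forall>\<phi>. endo \<phi> \<longrightarrow>
        finite (quotient_set (sumset (\<phi> ` S) S) S) \<and>
        card (quotient_set (sumset (\<phi> ` S) S) S) \<le> m))"

definition commensurable :: "'a::ab_group_add set \<Rightarrow> 'a set \<Rightarrow> bool" where
  "commensurable B C \<longleftrightarrow> finite (quotient_set (sumset B C) B) \<and> finite (quotient_set (sumset B C) C)"

end

theory Submission
  imports Defs
begin

definition cs :: "'a::ab_group_add set \<Rightarrow> 'a \<Rightarrow> 'a set" where
  "cs Y a = {a + b |b. b \<in> Y}"

lemma quot_cs: "quotient_set A Y = cs Y ` A"
  unfolding quotient_set_def cs_def by simp

lemma subgrp_diff: "subgrp Y \<Longrightarrow> a \<in> Y \<Longrightarrow> b \<in> Y \<Longrightarrow> a - b \<in> Y"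
  unfolding subgrp_def by (metis diff_conv_add_uminus)

lemma subgrp_add: "subgrp Y \<Longrightarrow> a \<in> Y \<Longrightarrow> b \<in> Y \<Longrightarrow> a + b \<in> Y"
  unfolding subgrp_def by blast

lemma subgrp_zero: "subgrp Y \<Longrightarrow> 0 \<in> Y"
  unfolding subgrp_def by blast

lemma subgrp_neg: "subgrp Y \<Longrightarrow> a \<in> Y \<Longrightarrow> - a \<in> Y"
  unfolding subgrp_def by blast

lemma cs_mem: "subgrp Y \<Longrightarrow> a \<in> cs Y a"
  unfolding cs_def using subgrp_zero[of Y] by force

lemma cs_eq_iff:
  assumes "subgrp Y" shows "cs Y a = cs Y b \<longleftrightarrow> a - b \<in> Y"
proof
  assume "cs Y a = cs Y b"
  then have "a \<in> cs Y b" using cs_mem[OF assms] by blast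
  then obtain y where "y \<in> Y" "a = b + y" unfolding cs_def by blast
  then show "a - b \<in> Y" by (simp add: algebra_simps)
next
  assume d: "a - b \<in> Y"
  have d2: "b - a \<in> Y" using subgrp_neg[OF assms d] by simp
  show "cs Y a = cs Y b"
  proof (rule set_eqI)
    fix x
    show "x \<in> cs Y a \<longleftrightarrow> x \<in> cs Y b"
    proof
      assume "x \<in> cs Y a"
      then obtain y where y: "y \<in> Y" "x = a + y" unfolding cs_def by blast
      then have "x = b + ((a - b) + y)" by (simp add: algebra_simps)
      moreover have "(a - b) + y \<in> Y" using subgrp_add[OF assms d y(1)] .
      ultimately show "x \<in> cs Y b" unfolding cs_def by blast
    next
      assume "x \<in> cs Y b"
      then obtain y where y: "y \<in> Y" "x = b + y" unfolding cs_def by blast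
      then have "x = a + ((b - a) + y)" by (simp add: algebra_simps)
      moreover have "(b - a) + y \<in> Y" using subgrp_add[OF assms d2 y(1)] .
      ultimately show "x \<in> cs Y a" unfolding cs_def by blast
    qed
  qed
qed

lemma cs_eq_Y: "subgrp Y \<Longrightarrow> cs Y a = cs Y 0 \<longleftrightarrow> a \<in> Y"
  using cs_eq_iff by force

lemma cs_sumset:
  assumes "subgrp Y" "H \<subseteq> Y" "0 \<in> H"
  shows "sumset (cs H a) Y = cs Y a"
proof (rule set_eqI)
  fix x
  show "x \<in> sumset (cs H a) Y \<longleftrightarrow> x \<in> cs Y a"
  proof
    assume "x \<in> sumset (cs H a) Y"
    then obtain h y where "h \<in> H" "y \<in> Y" "x = (a + h) + y" unfolding sumset_def cs_def by blast
    moreover then have "h + y \<in> Y" using assms subgrp_add by blast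
    ultimately show "x \<in> cs Y a" unfolding cs_def by (auto simp: add.assoc)
  next
    assume "x \<in> cs Y a"
    then obtain y where "y \<in> Y" "x = (a + 0) + y" unfolding cs_def by auto
    then show "x \<in> sumset (cs H a) Y" unfolding sumset_def cs_def using assms(3) by blast
  qed
qed

lemma endo_0: "endo e \<Longrightarrow> e 0 = 0"
  unfolding endo_def by (metis add.right_neutral add_left_cancel)

lemma endo_neg: "endo e \<Longrightarrow> e (- x) = - e x"
  unfolding endo_def by (metis add.right_inverse add_eq_0_iff endo_0 endo_def)

lemma endo_diff: "endo e \<Longrightarrow> e (x - y) = e x - e y"
  by (metis diff_conv_add_uminus endo_def endo_neg)

lemma endo_id: "endo id" unfolding endo_def by simp

lemma endo_plus: "endo f \<Longrightarrow> endo g \<Longrightarrow> endo (\<lambda>v. f v + g v)"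
  unfolding endo_def by (simp add: algebra_simps)

lemma endo_comp: "endo f \<Longrightarrow> endo g \<Longrightarrow> endo (f \<circ> g)"
  unfolding endo_def by simp

definition fc :: "'a::ab_group_add set \<Rightarrow> 'a set \<Rightarrow> bool" where
  "fc A B \<longleftrightarrow> (\<exists>T. finite T \<and> A \<subseteq> sumset T B)"

lemma fc_quot:
  assumes "subgrp B" "fc A B" "A' \<subseteq> A"
  shows "finite (quotient_set A' B)"
proof -
  obtain T where T: "finite T" "A \<subseteq> sumset T B" using assms(2) fc_def by blast
  have "quotient_set A' B \<subseteq> cs B ` T"
  proof
    fix C assume "C \<in> quotient_set A' B"
    then obtain a where a: "a \<in> A'" "C = cs B a" by (auto simp: quot_cs)
    then obtain t b where "t \<in> T" "b \<in> B" "a = t + b" using T assms(3) unfolding sumset_def by blast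
    then have "cs B a = cs B t" using cs_eq_iff[OF assms(1)] by simp
    then show "C \<in> cs B ` T" using a \<open>t \<in> T\<close> by blast
  qed
  then show ?thesis using T(1) finite_subset by blast
qed

lemma quot_fc:
  assumes "subgrp B" "finite (quotient_set A B)"
  shows "fc A B"
proof -
  obtain R where R: "R \<subseteq> A" "finite R" "cs B ` A = cs B ` R"
    using finite_subset_image[of "cs B ` A" "cs B" A] assms(2) by (auto simp: quot_cs)
  have "A \<subseteq> sumset R B"
  proof
    fix a assume "a \<in> A"
    then obtain r where r: "r \<in> R" "cs B a = cs B r" using R(3) by (metis image_iff)
    then have "a - r \<in> B" using cs_eq_iff[OF assms(1)] by blast
    moreover have "a = r + (a - r)" by simp
    ultimately show "a \<in> sumset R B" unfolding sumset_def using r(1) by blast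
  qed
  then show ?thesis using R(2) fc_def by blast
qed

lemma finite_sumset: "finite S \<Longrightarrow> finite T \<Longrightarrow> finite (sumset S T)"
proof -
  assume "finite S" "finite T"
  moreover have "sumset S T = (\<lambda>(x,y). x + y) ` (S \<times> T)" unfolding sumset_def by auto
  ultimately show ?thesis by simp
qed

lemma fc_trans:
  assumes "fc A B" "fc B C" shows "fc A C"
proof -
  obtain T1 where T1: "finite T1" "A \<subseteq> sumset T1 B" using assms(1) fc_def by blast
  obtain T2 where T2: "finite T2" "B \<subseteq> sumset T2 C" using assms(2) fc_def by blast
  have "A \<subseteq> sumset (sumset T1 T2) C"
  proof
    fix a assume "a \<in> A"
    then obtain t1 b where "t1 \<in> T1" "b \<in> B" "a = t1 + b" using T1 unfolding sumset_def by blast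
    moreover then obtain t2 c where "t2 \<in> T2" "c \<in> C" "b = t2 + c" using T2 unfolding sumset_def by blast
    ultimately have "t1 + t2 \<in> sumset T1 T2" "a = (t1 + t2) + c" "c \<in> C"
      unfolding sumset_def by (auto simp: add.assoc)
    then show "a \<in> sumset (sumset T1 T2) C" unfolding sumset_def by blast
  qed
  then show ?thesis using finite_sumset[OF T1(1) T2(1)] fc_def by blast
qed

lemma fc_refl: "subgrp B \<Longrightarrow> fc B B"
  unfolding fc_def sumset_def by (rule exI[of _ "{0}"]) auto

lemma fc_mono: "A \<subseteq> A' \<Longrightarrow> fc A' B \<Longrightarrow> fc A B"
  unfolding fc_def by blast

inductive_set genF :: "'a::ab_group_add set \<Rightarrow> 'a set" for X where
  base: "endo e \<Longrightarrow> x \<in> X \<Longrightarrow> e x \<in> genF X"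
| add: "a \<in> genF X \<Longrightarrow> b \<in> genF X \<Longrightarrow> a + b \<in> genF X"
| neg: "a \<in> genF X \<Longrightarrow> - a \<in> genF X"

lemma genF_sub: "x \<in> X \<Longrightarrow> x \<in> genF X"
  using genF.base[OF endo_id] by simp

lemma genF_fi:
  assumes "subgrp X" shows "fully_invariant (genF X)"
proof -
  have "subgrp (genF X)" unfolding subgrp_def
    using genF_sub subgrp_zero[OF assms] genF.add genF.neg by blast
  moreover have "\<phi> a \<in> genF X" if "endo \<phi>" "a \<in> genF X" for \<phi> a
    using that(2)
  proof induct
    case (base e x) then show ?case using genF.base[OF endo_comp[OF that(1) base(1)] base(2)] by simp
  next
    case (add a b) then show ?case using that(1) genF.add unfolding endo_def by metis
  next
    case (neg a) then show ?case using endo_neg[OF that(1)] genF.neg by metis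
  qed
  ultimately show ?thesis unfolding fully_invariant_def by blast
qed

lemma genF_le:
  assumes "subgrp Y" "\<And>e x. endo e \<Longrightarrow> x \<in> X \<Longrightarrow> e x \<in> Y"
  shows "genF X \<subseteq> Y"
proof
  fix a assume "a \<in> genF X" then show "a \<in> Y"
    by induct (use assms subgrp_add subgrp_neg in blast)+
qed


lemma bound:
  assumes "subgrp H" "subgrp Y" "X \<subseteq> H" "H \<subseteq> Y" "endo e"
    "finite (quotient_set (sumset (e`H) H) H)" "card (quotient_set (sumset (e`H) H) H) \<le> m"
  shows "finite (quotient_set (e`X) Y) \<and> card (quotient_set (e`X) Y) \<le> m"
proof -
  let ?Q0 = "quotient_set (sumset (e`H) H) H"
  have sub: "quotient_set (e`X) Y \<subseteq> (\<lambda>C. sumset C Y) ` ?Q0"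
  proof
    fix C assume "C \<in> quotient_set (e`X) Y"
    then obtain x where x: "x \<in> X" "C = cs Y (e x)" by (auto simp: quot_cs)
    have "e x + 0 \<in> sumset (e`H) H" unfolding sumset_def
      using x(1) assms(3) subgrp_zero[OF assms(1)] by blast
    then have "cs H (e x) \<in> ?Q0" by (auto simp: quot_cs)
    moreover have "sumset (cs H (e x)) Y = C"
      using cs_sumset[OF assms(2) assms(4) subgrp_zero[OF assms(1)]] x(2) by simp
    ultimately show "C \<in> (\<lambda>C. sumset C Y) ` ?Q0" by blast
  qed
  have "finite ((\<lambda>C. sumset C Y) ` ?Q0)" using assms(6) by simp
  moreover have "card ((\<lambda>C. sumset C Y) ` ?Q0) \<le> m" using card_image_le[OF assms(6), of "\<lambda>C. sumset C Y"] assms(7) by linarith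
  ultimately show ?thesis using sub finite_subset card_mono by (metis le_trans)
qed

theorem theorem2p4:
  fixes H :: "'a::ab_group_add set"
  assumes "uniformly_fully_inert H"
  shows "\<exists>F. fully_invariant F \<and> commensurable H F"
proof -
  have sH: "subgrp H" using assms uniformly_fully_inert_def by blast
  obtain m :: nat where Bd: "\<And>\<phi>. endo \<phi> \<Longrightarrow> finite (quotient_set (sumset (\<phi> ` H) H) H) \<and>
        card (quotient_set (sumset (\<phi> ` H) H) H) \<le> m"
    using assms uniformly_fully_inert_def by blast
  define good where "good X Y \<longleftrightarrow> subgrp X \<and> subgrp Y \<and> X \<subseteq> H \<and> H \<subseteq> Y \<and> fc H X \<and> fc Y H" for X Y
  have bnd: "finite (quotient_set (e`X) Y) \<and> card (quotient_set (e`X) Y) \<le> m"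
    if "good X Y" "endo e" for X Y e
    using bound[OF sH _ _ _ that(2) Bd[OF that(2), THEN conjunct1] Bd[OF that(2), THEN conjunct2]] that(1)
    unfolding good_def by blast
  define P where "P k \<longleftrightarrow> (\<exists>X Y. good X Y \<and> (\<forall>e. endo e \<longrightarrow> card (quotient_set (e`X) Y) \<le> k))" for k
  have "good H H" unfolding good_def using sH fc_refl by blast
  then have "P m" unfolding P_def using bnd by blast
  then obtain k where Pk: "P k" and minP: "\<And>j. j < k \<Longrightarrow> \<not> P j" using exists_least_iff[of P] by blast
  then obtain X Y where gXY: "good X Y" and cardk: "\<And>e. endo e \<Longrightarrow> card (quotient_set (e`X) Y) \<le> k"
    unfolding P_def by blast
  have sX: "subgrp X" and sY: "subgrp Y" and XH: "X \<subseteq> H" and HY: "H \<subseteq> Y" and fHX: "fc H X" and fYH: "fc Y H"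
    using gXY good_def by auto
  show ?thesis
  proof (cases "k \<le> 1")
    case True
    have inY: "e x \<in> Y" if "endo e" "x \<in> X" for e x
    proof -
      have fin: "finite (quotient_set (e`X) Y)" using bnd[OF gXY that(1)] by blast
      have "card (quotient_set (e`X) Y) \<le> Suc 0" using cardk[OF that(1)] True by simp
      then have all: "\<forall>a1\<in>quotient_set (e`X) Y. \<forall>a2\<in>quotient_set (e`X) Y. a1 = a2"
        using card_le_Suc0_iff_eq[OF fin] by blast
      have "cs Y (e x) \<in> quotient_set (e`X) Y" using that(2) by (auto simp: quot_cs)
      moreover have "cs Y (e 0) \<in> quotient_set (e`X) Y" using subgrp_zero[OF sX] by (auto simp: quot_cs)
      ultimately have "cs Y (e x) = cs Y 0" using all endo_0[OF that(1)] by metis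
      then show ?thesis using cs_eq_Y[OF sY] by blast
    qed
    define F where "F = genF X"
    have fiF: "fully_invariant F" unfolding F_def using genF_fi[OF sX] .
    have XF: "X \<subseteq> F" unfolding F_def using genF_sub by blast
    have FY: "F \<subseteq> Y" unfolding F_def by (rule genF_le[OF sY]) (rule inY)
    have sF: "subgrp F" using fiF fully_invariant_def by blast
    have SY: "sumset H F \<subseteq> Y" unfolding sumset_def using HY FY subgrp_add[OF sY] by blast
    have c1: "finite (quotient_set (sumset H F) H)" using fc_quot[OF sH fYH SY] .
    have "fc X F" unfolding fc_def sumset_def using XF
      by (intro exI[of _ "{0}"]) force
    then have "fc Y F" using fc_trans[OF fYH fc_trans[OF fHX]] by blast
    then have c2: "finite (quotient_set (sumset H F) F)" using fc_quot[OF sF _ SY] by blast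
    show ?thesis using fiF c1 c2 commensurable_def by blast
  next
    case False
    then have k2: "k \<ge> 2" by simp
    have "\<not> P (k - 1)" using minP k2 by simp
    then have "\<not> (\<forall>e. endo e \<longrightarrow> card (quotient_set (e`X) Y) \<le> k - 1)"
      using gXY unfolding P_def by blast
    then obtain f where ef: "endo f" and fk0: "\<not> card (quotient_set (f`X) Y) \<le> k - 1"
      by blast
    have fk: "card (quotient_set (f`X) Y) \<ge> k" using fk0 by linarith
    define X' where "X' = {x\<in>X. f x \<in> Y}"
    define Y' where "Y' = sumset Y (f`X)"
    have sX': "subgrp X'" unfolding subgrp_def X'_def
    proof (intro conjI ballI)
      show "0 \<in> {x \<in> X. f x \<in> Y}" using subgrp_zero[OF sX] subgrp_zero[OF sY] endo_0[OF ef] by simp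
    next
      fix a b assume a: "a \<in> {x \<in> X. f x \<in> Y}" and b: "b \<in> {x \<in> X. f x \<in> Y}"
      then have "a + b \<in> X" "f a + f b \<in> Y" using subgrp_add[OF sX] subgrp_add[OF sY] by auto
      then show "a + b \<in> {x \<in> X. f x \<in> Y}" using ef unfolding endo_def by simp
    next
      fix a assume a: "a \<in> {x \<in> X. f x \<in> Y}"
      then have "- a \<in> X" "- f a \<in> Y" using subgrp_neg[OF sX] subgrp_neg[OF sY] by auto
      then show "- a \<in> {x \<in> X. f x \<in> Y}" using endo_neg[OF ef] by simp
    qed
    have sY': "subgrp Y'" unfolding subgrp_def
    proof (intro conjI ballI)
      have "0 + f 0 \<in> Y'" unfolding Y'_def sumset_def using subgrp_zero[OF sX] subgrp_zero[OF sY] by blast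
      then show "0 \<in> Y'" using endo_0[OF ef] by simp
    next
      fix a b assume "a \<in> Y'" "b \<in> Y'"
      then obtain y1 x1 y2 x2 where "y1 \<in> Y" "x1 \<in> X" "a = y1 + f x1" "y2 \<in> Y" "x2 \<in> X" "b = y2 + f x2"
        unfolding Y'_def sumset_def by blast
      moreover then have "a + b = (y1 + y2) + f (x1 + x2)" using ef[unfolded endo_def] by (simp add: algebra_simps)
      ultimately show "a + b \<in> Y'" unfolding Y'_def sumset_def using sX sY subgrp_add by blast
    next
      fix a assume "a \<in> Y'"
      then obtain y1 x1 where "y1 \<in> Y" "x1 \<in> X" "a = y1 + f x1"
        unfolding Y'_def sumset_def by blast
      moreover then have "- a = (- y1) + f (- x1)" using endo_neg[OF ef] by (simp add: algebra_simps)
      ultimately show "- a \<in> Y'" unfolding Y'_def sumset_def using sX sY subgrp_neg by blast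
    qed
    have YY': "Y \<subseteq> Y'"
    proof
      fix y assume "y \<in> Y"
      then have "y + f 0 \<in> Y'" unfolding Y'_def sumset_def using subgrp_zero[OF sX] by blast
      then show "y \<in> Y'" using endo_0[OF ef] by simp
    qed
    have fXY': "f x \<in> Y'" if "x \<in> X" for x
    proof -
      have "0 + f x \<in> Y'" unfolding Y'_def sumset_def using subgrp_zero[OF sY] that by blast
      then show ?thesis by simp
    qed
    have finf: "finite (quotient_set (f`X) Y)" using bnd[OF gXY ef] by blast
    have fXX': "fc X X'"
    proof -
      obtain R where R: "R \<subseteq> X" "finite R" "(\<lambda>x. cs Y (f x)) ` X = (\<lambda>x. cs Y (f x)) ` R"
        using finite_subset_image[of "(\<lambda>x. cs Y (f x)) ` X" "\<lambda>x. cs Y (f x)" X] finf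
        by (auto simp: quot_cs image_image)
      have "X \<subseteq> sumset R X'"
      proof
        fix x assume x: "x \<in> X"
        have "cs Y (f x) \<in> (\<lambda>x. cs Y (f x)) ` R" using R(3) x by blast
        then obtain r where r: "r \<in> R" "cs Y (f x) = cs Y (f r)" by blast
        then have "f (x - r) \<in> Y" using cs_eq_iff[OF sY] endo_diff[OF ef] by simp
        moreover have "x - r \<in> X" using subgrp_diff[OF sX x] r(1) R(1) by blast
        ultimately have "x - r \<in> X'" unfolding X'_def by blast
        moreover have "x = r + (x - r)" by simp
        ultimately show "x \<in> sumset R X'" unfolding sumset_def using r(1) by blast
      qed
      then show ?thesis using R(2) fc_def by blast
    qed
    have fY'Y: "fc Y' Y"
    proof -
      obtain T where T: "finite T" "f`X \<subseteq> sumset T Y" using quot_fc[OF sY finf] fc_def by blast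
      have "Y' \<subseteq> sumset T Y"
      proof
        fix a assume "a \<in> Y'"
        then obtain y x where yx: "y \<in> Y" "x \<in> X" "a = y + f x" unfolding Y'_def sumset_def by blast
        then obtain t y2 where "t \<in> T" "y2 \<in> Y" "f x = t + y2" using T(2) unfolding sumset_def by blast
        moreover then have "a = t + (y + y2)" using yx(3) by (simp add: algebra_simps)
        moreover have "y + y2 \<in> Y" using subgrp_add[OF sY yx(1) \<open>y2 \<in> Y\<close>] .
        ultimately show "a \<in> sumset T Y" unfolding sumset_def by blast
      qed
      then show ?thesis using T(1) fc_def by blast
    qed
    have "X' \<subseteq> H" using XH unfolding X'_def by blast
    then have gXY': "good X' Y'" unfolding good_def
      using sX' sY' HY YY' fc_trans[OF fHX fXX'] fc_trans[OF fY'Y fYH] by blast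
    have "\<not> P (k - 1)" using minP k2 by simp
    then have "\<not> (\<forall>e. endo e \<longrightarrow> card (quotient_set (e`X') Y') \<le> k - 1)"
      using gXY' unfolding P_def by blast
    then obtain g where eg: "endo g" and gk0: "\<not> card (quotient_set (g`X') Y') \<le> k - 1"
      by blast
    have gk: "card (quotient_set (g`X') Y') \<ge> k" using gk0 by linarith
    define h where "h = (\<lambda>v. f v + g v)"
    have eh: "endo h" unfolding h_def using endo_plus[OF ef eg] .
    define A where "A = quotient_set (g`X') Y"
    define B where "B = quotient_set (g`X) Y"
    have finB: "finite B" and cB: "card B \<le> k" unfolding B_def using bnd[OF gXY eg] cardk[OF eg] by auto
    have AB: "A \<subseteq> B" unfolding A_def B_def X'_def by (auto simp: quot_cs)
    have "quotient_set (g`X') Y' = (\<lambda>C. sumset C Y') ` A"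
      unfolding A_def quot_cs using cs_sumset[OF sY' YY' subgrp_zero[OF sY]] by (simp add: image_image)
    then have "card (quotient_set (g`X') Y') \<le> card A" using card_image_le[OF finite_subset[OF AB finB], of "\<lambda>C. sumset C Y'"] by simp
    then have "card A = card B" using gk cB card_mono[OF finB AB] by linarith
    then have AeqB: "A = B" using card_subset_eq[OF finB AB] by blast
    obtain x1 where x1: "x1 \<in> X" "f x1 \<notin> Y"
    proof (rule ccontr)
      assume "\<not> thesis"
      then have allY: "\<forall>x\<in>X. f x \<in> Y" using that by blast
      have "quotient_set (f`X) Y \<subseteq> {cs Y 0}"
        using allY cs_eq_Y[OF sY] by (auto simp: quot_cs)
      then have "card (quotient_set (f`X) Y) \<le> 1" using card_mono[of "{cs Y 0}"] by simp
      then show False using fk k2 by simp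
    qed
    have "cs Y (g x1) \<in> A" using AeqB x1(1) unfolding B_def by (auto simp: quot_cs)
    then obtain z where z: "z \<in> X'" "cs Y (g x1) = cs Y (g z)" unfolding A_def by (auto simp: quot_cs)
    define x where "x = x1 - z"
    have zX: "z \<in> X" "f z \<in> Y" using z(1) X'_def by auto
    have xX: "x \<in> X" unfolding x_def using subgrp_diff[OF sX x1(1) zX(1)] .
    have gx: "g x \<in> Y" unfolding x_def using z(2) cs_eq_iff[OF sY] endo_diff[OF eg] by simp
    have fx: "f x \<notin> Y"
    proof
      assume "f x \<in> Y"
      then have "f x + f z \<in> Y" using subgrp_add[OF sY _ zX(2)] by blast
      moreover have "f x + f z = f x1" unfolding x_def using endo_diff[OF ef] by simp
      ultimately show False using x1(2) by simp
    qed
    have hxY: "h x \<notin> Y"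
    proof
      assume "h x \<in> Y"
      then have "h x - g x \<in> Y" using subgrp_diff[OF sY _ gx] by blast
      then show False using fx unfolding h_def by simp
    qed
    have hxY': "h x \<in> Y'" unfolding h_def using subgrp_add[OF sY' fXY'[OF xX]] gx YY' by blast
    define T where "T = quotient_set (h`X) Y"
    define \<psi> where "\<psi> = (\<lambda>C. sumset C Y')"
    have finT: "finite T" and cT: "card T \<le> k" unfolding T_def using bnd[OF gXY eh] cardk[OF eh] by auto
    have psi_cs: "\<psi> (cs Y a) = cs Y' a" for a unfolding \<psi>_def using cs_sumset[OF sY' YY' subgrp_zero[OF sY]] .
    have sup: "quotient_set (g`X') Y' \<subseteq> \<psi> ` T"
    proof
      fix C assume "C \<in> quotient_set (g`X') Y'"
      then obtain w where w: "w \<in> X'" "C = cs Y' (g w)" by (auto simp: quot_cs)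
      have wX: "w \<in> X" "f w \<in> Y" using w(1) X'_def by auto
      have "h w - g w \<in> Y'" unfolding h_def using wX(2) YY' by auto
      then have "cs Y' (h w) = C" using w(2) cs_eq_iff[OF sY'] by simp
      moreover have "cs Y (h w) \<in> T" unfolding T_def using wX(1) by (auto simp: quot_cs)
      moreover have "\<psi> (cs Y (h w)) = cs Y' (h w)" by (rule psi_cs)
      ultimately show "C \<in> \<psi> ` T" by (metis image_eqI)
    qed
    have ninj: "\<not> inj_on \<psi> T"
    proof
      assume inj: "inj_on \<psi> T"
      have m1: "cs Y (h 0) \<in> T" "cs Y (h x) \<in> T" unfolding T_def using xX subgrp_zero[OF sX] by (auto simp: quot_cs)
      have "\<psi> (cs Y (h 0)) = \<psi> (cs Y (h x))"
        using psi_cs cs_eq_iff[OF sY'] hxY' endo_0[OF eh] subgrp_neg[OF sY' hxY'] by simp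
      then have "cs Y (h 0) = cs Y (h x)" using inj_onD[OF inj _ m1] by blast
      then have "cs Y (h x) = cs Y 0" using endo_0[OF eh] by simp
      then have "h x \<in> Y" using cs_eq_Y[OF sY] by blast
      then show False using hxY by blast
    qed
    have "card (\<psi> ` T) < card T"
      proof -
      have "card (\<psi> ` T) \<noteq> card T" using ninj inj_on_iff_eq_card[OF finT] by blast
      then show ?thesis using card_image_le[OF finT, of \<psi>] by linarith
    qed
    moreover have "card (quotient_set (g`X') Y') \<le> card (\<psi> ` T)" using card_mono[OF _ sup] finT by simp
    ultimately show ?thesis using gk cT by linarith
  qed
qed

end
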